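(* Let $\Bbbk$ be a field of characteristic zero, $S=\Bbbk[x_1,\ldots,x_5]$, $d\geq 5$, and $I=(x_1^d,\dots , x_5^d,x_1^{\lceil d/2\rceil}x_2^{\lfloor d/2\rfloor})$. Then $S/I$ fails the WLP in degree $t=\lfloor (5d-5)/2\rfloor-1$.
   Context: For a monomial ideal $I$, $A=S/I$ fails the WLP in degree $i$ if $\times(x_1+\cdots+x_5): A_i\to A_{i+1}$ is neither injective nor surjective. *)

theory Defs
  imports Main "HOL-Library.Poly_Mapping" "HOL-Library.Numeral_Type"
begin

text \<open>Polynomial ring S = k[x_1,...,x_5]: finitely supported maps from monomials
  (exponent vectors indexed by the 5-element type 5) to coefficients.\<close>
type_synonym 'k poly5 = "(5 \<Rightarrow>\<^sub>0 nat) \<Rightarrow>\<^sub>0 'k"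

definition var :: "5 \<Rightarrow> 'k::comm_ring_1 poly5" where
  "var j = Poly_Mapping.single (Poly_Mapping.single j 1) 1"

definition mdeg :: "(5 \<Rightarrow>\<^sub>0 nat) \<Rightarrow> nat" where
  "mdeg m = (\<Sum>j\<in>UNIV. Poly_Mapping.lookup m j)"

definition homogeneous :: "'k::comm_ring_1 poly5 \<Rightarrow> nat \<Rightarrow> bool" where
  "homogeneous f i \<longleftrightarrow> (\<forall>m\<in>Poly_Mapping.keys f. mdeg m = i)"

definition ideal_gen :: "'k::comm_ring_1 poly5 set \<Rightarrow> 'k poly5 set" where
  "ideal_gen G = {\<Sum>g\<in>F. q g * g | F q. finite F \<and> F \<subseteq> G}"

definition lin_form :: "'k::comm_ring_1 poly5" where
  "lin_form = (\<Sum>j\<in>UNIV. var j)"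

text \<open>Multiplication by the linear form A_i -> A_{i+1}, A = S/I, on graded pieces.\<close>
definition mult_L_injective :: "'k::comm_ring_1 poly5 set \<Rightarrow> nat \<Rightarrow> bool" where
  "mult_L_injective I i \<longleftrightarrow>
     (\<forall>f. homogeneous f i \<longrightarrow> lin_form * f \<in> I \<longrightarrow> f \<in> I)"

definition mult_L_surjective :: "'k::comm_ring_1 poly5 set \<Rightarrow> nat \<Rightarrow> bool" where
  "mult_L_surjective I i \<longleftrightarrow>
     (\<forall>g. homogeneous g (Suc i) \<longrightarrow>
        (\<exists>f h. homogeneous f i \<and> h \<in> I \<and> g = lin_form * f + h))"

definition fails_WLP_in_degree :: "'k::comm_ring_1 poly5 set \<Rightarrow> nat \<Rightarrow> bool" where
  "fails_WLP_in_degree I i \<longleftrightarrow> \<not> mult_L_injective I i \<and> \<not> mult_L_surjective I i"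

text \<open>I = (x_1^d,...,x_5^d, x_1^{ceil(d/2)} x_2^{floor(d/2)}); x_1, x_2 are var 0, var 1.\<close>
definition the_ideal :: "nat \<Rightarrow> 'k::comm_ring_1 poly5 set" where
  "the_ideal d = ideal_gen ({var j ^ d | j. True} \<union>
      {var 0 ^ ((d + 1) div 2) * var 1 ^ (d div 2)})"

end

theory Submission
  imports Defs
begin

abbreviation lookup :: "('a \<Rightarrow>\<^sub>0 'b::zero) \<Rightarrow> 'a \<Rightarrow> 'b" where "lookup \<equiv> Poly_Mapping.lookup"
abbreviation keys :: "('a \<Rightarrow>\<^sub>0 'b::zero) \<Rightarrow> 'a set" where "keys \<equiv> Poly_Mapping.keys"
abbreviation single :: "'a \<Rightarrow> 'b \<Rightarrow> ('a \<Rightarrow>\<^sub>0 'b::zero)" where "single \<equiv> Poly_Mapping.single"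

lemma dist5: "(0::5) \<noteq> 1" "(0::5) \<noteq> 2" "(0::5) \<noteq> 3" "(0::5) \<noteq> 4"
  "(1::5) \<noteq> 2" "(1::5) \<noteq> 3" "(1::5) \<noteq> 4" "(2::5) \<noteq> 3" "(2::5) \<noteq> 4" "(3::5) \<noteq> 4"
  by simp_all

lemma UNIV5: "(UNIV::5 set) = {0,1,2,3,4}"
proof -
  have c: "card {0,1,2,3,4::5} = 5" by (simp add: dist5)
  have "CARD(5) = 5" by simp
  then show ?thesis using c card_subset_eq[of "UNIV::5 set" "{0,1,2,3,4}"] by simp
qed

lemma j5: "(j::5) = 0 \<or> j = 1 \<or> j = 2 \<or> j = 3 \<or> j = 4"
proof -
  have "j \<in> (UNIV::5 set)" by (rule UNIV_I)
  then have "j \<in> {0,1,2,3,4}" by (simp only: UNIV5)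
  then show ?thesis by (simp only: insert_iff empty_iff simp_thms)
qed

lemma all5: "(\<forall>j::5. P j) \<longleftrightarrow> P 0 \<and> P 1 \<and> P 2 \<and> P 3 \<and> P 4"
  using j5 by metis

lemma ex5: "(\<exists>j::5. P j) \<longleftrightarrow> P 0 \<or> P 1 \<or> P 2 \<or> P 3 \<or> P 4"
  using j5 by metis

lemma sum5: "(\<Sum>j\<in>UNIV. f j) = f (0::5) + f 1 + f 2 + f 3 + f 4"
proof -
  have "(\<Sum>j\<in>UNIV. f j) = (\<Sum>j\<in>{0,1,2,3,4}. f j)" by (simp only: UNIV5)
  also have "\<dots> = f (0::5) + (f 1 + (f 2 + (f 3 + f 4)))" by (simp add: dist5)
  finally show ?thesis by (simp add: add.assoc)
qed

lemma X: "(\<Sum>aa. (c::'a::comm_semiring_1) when \<nu> = aa \<and> k = a + aa) = (c when k = (a::5 \<Rightarrow>\<^sub>0 nat) + \<nu>)"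
proof -
  have "\<And>aa. (c when \<nu> = aa \<and> k = a + aa) = ((c when k = a + \<nu>) when aa = \<nu>)" by (auto simp: when_def)
  then show ?thesis by simp
qed
lemma LM1: "lookup ((p::'a::comm_semiring_1 poly5) * single \<nu> c) (\<gamma> + \<nu>) = lookup p \<gamma> * c"
proof -
  have e: "\<And>a. (\<gamma> + \<nu> = a + \<nu>) = (a = \<gamma>)" by auto
  show ?thesis by (simp add: lookup_mult lookup_single when_when conj_commute X mult_when e)
qed
lemma LM2: "(\<forall>\<gamma>. \<mu> \<noteq> \<gamma> + \<nu>) \<Longrightarrow> lookup ((p::'a::comm_semiring_1 poly5) * single \<nu> c) \<mu> = 0"
  by (simp add: lookup_mult lookup_single when_when conj_commute X mult_when)

lemma keys_multE: "\<mu> \<in> keys (p * q) \<Longrightarrow> (\<And>\<alpha> \<beta>. \<alpha> \<in> keys p \<Longrightarrow> \<beta> \<in> keys q \<Longrightarrow> \<mu> = \<alpha> + \<beta> \<Longrightarrow> R) \<Longrightarrow> R"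
  using keys_mult by blast

definition addf :: "((5 \<Rightarrow>\<^sub>0 nat) \<Rightarrow> nat) \<Rightarrow> bool" where
  "addf l \<longleftrightarrow> (\<forall>\<alpha> \<beta>. l (\<alpha> + \<beta>) = l \<alpha> + l \<beta>)"

definition hw :: "((5 \<Rightarrow>\<^sub>0 nat) \<Rightarrow> nat) \<Rightarrow> 'k::comm_ring_1 poly5 \<Rightarrow> nat \<Rightarrow> bool" where
  "hw l p c \<longleftrightarrow> (\<forall>\<mu>\<in>keys p. l \<mu> = c)"
definition bw :: "((5 \<Rightarrow>\<^sub>0 nat) \<Rightarrow> nat) \<Rightarrow> 'k::comm_ring_1 poly5 \<Rightarrow> nat \<Rightarrow> bool" where
  "bw l p c \<longleftrightarrow> (\<forall>\<mu>\<in>keys p. l \<mu> \<le> c)"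

lemma addf_0: "addf l \<Longrightarrow> l 0 = 0"
  unfolding addf_def by (metis add.right_neutral add_cancel_right_right)

lemma addf_lk: "addf (\<lambda>\<mu>. lookup \<mu> j)"
  by (simp add: addf_def lookup_add)
lemma addf_plus: "addf l \<Longrightarrow> addf m \<Longrightarrow> addf (\<lambda>\<mu>. l \<mu> + m \<mu>)"
  by (simp add: addf_def)
lemma addf_mdeg: "addf mdeg"
  by (simp add: addf_def mdeg_def lookup_add sum.distrib)

lemma hw_mult: "addf l \<Longrightarrow> hw l p a \<Longrightarrow> hw l q b \<Longrightarrow> hw l (p*q) (a+b)"
  unfolding hw_def addf_def by (auto elim!: keys_multE)
lemma bw_mult: "addf l \<Longrightarrow> bw l p a \<Longrightarrow> bw l q b \<Longrightarrow> bw l (p*q) (a+b)"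
  unfolding bw_def addf_def by (force elim!: keys_multE intro: add_mono)
lemma hw_one: "addf l \<Longrightarrow> hw l 1 0"
  by (simp add: hw_def addf_0)
lemma hw_pow: "addf l \<Longrightarrow> hw l p a \<Longrightarrow> hw l (p^n) (n*a)"
  by (induction n) (simp_all add: hw_one hw_mult)
lemma bw_pow: "addf l \<Longrightarrow> bw l p a \<Longrightarrow> bw l (p^n) (n*a)"
  apply (induction n)
   apply (simp add: bw_def addf_0)
  apply (simp add: bw_mult)
  done
lemma keys_addD: "\<mu> \<in> keys (p + q) \<Longrightarrow> \<mu> \<in> keys p \<or> \<mu> \<in> keys q"
  using keys_add[of p q] by (meson UnE subsetD)
lemma hw_add: "hw l p a \<Longrightarrow> hw l q a \<Longrightarrow> hw l (p+q) a"
  unfolding hw_def by (meson keys_addD)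
lemma bw_add: "bw l p a \<Longrightarrow> bw l q a \<Longrightarrow> bw l (p+q) a"
  unfolding bw_def by (meson keys_addD)
lemma keys_uminus5: "keys (-p) = keys (p::'k::comm_ring_1 poly5)"
  by (auto simp: in_keys_iff)
lemma hw_uminus: "hw l p a \<Longrightarrow> hw l (-p) a"
  unfolding hw_def by (simp only: keys_uminus5)
lemma bw_uminus: "bw l p a \<Longrightarrow> bw l (-p) a"
  unfolding bw_def by (simp only: keys_uminus5)
lemma keys_diffD: "\<mu> \<in> keys (p - q) \<Longrightarrow> \<mu> \<in> keys p \<or> \<mu> \<in> keys (q::'k::comm_ring_1 poly5)"
  by (auto simp: in_keys_iff lookup_minus)
lemma hw_diff: "hw l p a \<Longrightarrow> hw l q a \<Longrightarrow> hw l (p-q) a"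
  unfolding hw_def by (meson keys_diffD)
lemma bw_diff: "bw l p a \<Longrightarrow> bw l q a \<Longrightarrow> bw l (p-q) a"
  unfolding bw_def by (meson keys_diffD)
lemma hw_zero: "hw l 0 a" by (simp add: hw_def)
lemma hw_sum: "(\<And>i. i \<in> A \<Longrightarrow> hw l (f i) a) \<Longrightarrow> hw l (sum f A) a"
  by (induction A rule: infinite_finite_induct) (auto simp: hw_zero intro: hw_add)
lemma hw_bw: "hw l p a \<Longrightarrow> a \<le> b \<Longrightarrow> bw l p b"
  unfolding hw_def bw_def by auto
lemma bw_mono: "bw l p a \<Longrightarrow> a \<le> b \<Longrightarrow> bw l p b"
  unfolding bw_def by auto
lemma hw_single: "hw l (single \<mu> c) (l \<mu>)"
  by (simp add: hw_def)

lemma var_single: "var j = single (single j 1) 1"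
  by (simp add: var_def)

lemma var_pow: "(var j :: 'k::comm_ring_1 poly5) ^ n = single (single j n) 1"
proof (induction n)
  case 0 then show ?case by simp
next
  case (Suc n) then show ?case
    by (simp add: var_single mult_single single_add[symmetric] mult.commute)
qed

lemma hw_var: "hw l (var j) (l (single j 1))"
  by (simp add: var_single hw_single)

lemma homogeneous_hw: "homogeneous f i \<longleftrightarrow> hw mdeg f i"
  by (simp add: homogeneous_def hw_def)

lemma mdeg_single: "mdeg (single j n) = n"
  by (simp add: mdeg_def lookup_single when_def)

lemma lin_form5: "lin_form = var 0 + var 1 + var 2 + var 3 + var 4"
  by (simp add: lin_form_def sum5)



definition inI :: "nat \<Rightarrow> (5 \<Rightarrow>\<^sub>0 nat) \<Rightarrow> bool" where
  "inI d \<mu> \<longleftrightarrow> (\<exists>j. d \<le> lookup \<mu> j) \<or> ((d+1) div 2 \<le> lookup \<mu> 0 \<and> d div 2 \<le> lookup \<mu> 1)"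

lemma inI_add: "inI d \<alpha> \<Longrightarrow> inI d (\<alpha> + \<beta>)"
  unfolding inI_def by (auto simp: lookup_add intro: le_add1 trans_le_add1)

lemma inI_add2: "inI d \<beta> \<Longrightarrow> inI d (\<alpha> + \<beta>)"
  using inI_add[of d \<beta> \<alpha>] by (simp add: add.commute)

lemma gen_keys:
  assumes "g \<in> ({var j ^ d | j. True} \<union> {var 0 ^ ((d + 1) div 2) * var 1 ^ (d div 2)})"
    and "\<mu> \<in> keys (g :: 'k::comm_ring_1 poly5)"
  shows "inI d \<mu>"
proof -
  have a: "inI d (single j d)" for j
    unfolding inI_def by (rule disjI1, rule exI[of _ j], simp add: lookup_single)
  have b: "inI d (single 0 ((d + 1) div 2) + single 1 (d div 2))"
    unfolding inI_def by (rule disjI2, simp add: lookup_add lookup_single dist5)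
  show ?thesis using assms a b by (auto simp: var_pow mult_single)
qed

lemma ideal_keys:
  assumes "h \<in> (the_ideal d :: 'k::comm_ring_1 poly5 set)" "\<mu> \<in> keys h"
  shows "inI d \<mu>"
proof -
  obtain F q where h: "h = (\<Sum>g\<in>F. q g * g)" and F: "finite F"
    "F \<subseteq> {var j ^ d | j. True} \<union> {var 0 ^ ((d + 1) div 2) * var 1 ^ (d div 2)}"
    using assms(1) unfolding the_ideal_def ideal_gen_def by blast
  have "\<mu> \<in> (\<Union>g\<in>F. keys (q g * g))"
    using keys_sum[of "\<lambda>g. q g * g" F] assms(2) unfolding h by (rule subsetD)
  then obtain g where g: "g \<in> F" "\<mu> \<in> keys (q g * g)" by (rule UN_E)
  then obtain \<alpha> \<beta> where ab: "\<beta> \<in> keys g" "\<mu> = \<alpha> + \<beta>" by (elim keys_multE)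
  have "g \<in> {var j ^ d | j. True} \<union> {var 0 ^ ((d + 1) div 2) * var 1 ^ (d div 2)}"
    using F(2) g(1) by (rule subsetD)
  then have "inI d \<beta>" using ab(1) by (rule gen_keys)
  then show ?thesis unfolding ab(2) by (rule inI_add2)
qed

lemma ig_zero: "0 \<in> ideal_gen G"
  unfolding ideal_gen_def by (rule CollectI, rule exI[of _ "{}"], auto)

lemma ig_gen: "g \<in> G \<Longrightarrow> q * g \<in> ideal_gen G"
  unfolding ideal_gen_def
  by (rule CollectI, rule exI[of _ "{g}"], rule exI[of _ "\<lambda>_. q"], auto)

lemma ig_add:
  assumes "a \<in> ideal_gen G" "b \<in> ideal_gen G"
  shows "a + b \<in> ideal_gen G"
proof -
  obtain F1 q1 where a: "a = (\<Sum>g\<in>F1. q1 g * g)" "finite F1" "F1 \<subseteq> G"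
    using assms(1) unfolding ideal_gen_def by blast
  obtain F2 q2 where b: "b = (\<Sum>g\<in>F2. q2 g * g)" "finite F2" "F2 \<subseteq> G"
    using assms(2) unfolding ideal_gen_def by blast
  define q where "q g = (if g \<in> F1 then q1 g else 0) + (if g \<in> F2 then q2 g else 0)" for g
  have "(\<Sum>g\<in>F1 \<union> F2. q g * g) = (\<Sum>g\<in>F1 \<union> F2. (if g \<in> F1 then q1 g * g else 0))
        + (\<Sum>g\<in>F1 \<union> F2. (if g \<in> F2 then q2 g * g else 0))"
    unfolding sum.distrib[symmetric] by (rule sum.cong) (auto simp: q_def distrib_right)
  also have "(\<Sum>g\<in>F1 \<union> F2. (if g \<in> F1 then q1 g * g else 0)) = a"
    using a by (simp add: sum.inter_restrict[symmetric] Int_absorb1 b)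
  also have "(\<Sum>g\<in>F1 \<union> F2. (if g \<in> F2 then q2 g * g else 0)) = b"
    using b by (simp add: sum.inter_restrict[symmetric] Int_absorb1 a)
  finally show ?thesis unfolding ideal_gen_def using a b
    by (intro CollectI exI[of _ "F1 \<union> F2"] exI[of _ q]) auto
qed

lemma ig_sum: "(\<And>x. x \<in> A \<Longrightarrow> f x \<in> ideal_gen G) \<Longrightarrow> sum f A \<in> ideal_gen G"
  by (induction A rule: infinite_finite_induct) (auto simp: ig_zero intro: ig_add)

lemma poly_sum_single: "p = (\<Sum>\<mu>\<in>keys p. single \<mu> (lookup p \<mu>))"
proof (rule poly_mapping_eqI)
  fix \<nu>
  show "lookup p \<nu> = lookup (\<Sum>\<mu>\<in>keys p. single \<mu> (lookup p \<mu>)) \<nu>"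
    by (simp add: lookup_sum lookup_single when_def in_keys_iff)
qed

lemma single_in_ideal:
  assumes "inI d \<mu>"
  shows "single \<mu> c \<in> (the_ideal d :: 'k::comm_ring_1 poly5 set)"
proof -
  let ?G = "{var j ^ d | j. True} \<union> {var 0 ^ ((d + 1) div 2) * (var 1 :: 'k poly5) ^ (d div 2)}"
  show ?thesis
  proof (cases "\<exists>j. d \<le> lookup \<mu> j")
    case True
    then obtain j where j: "d \<le> lookup \<mu> j" by blast
    have "\<mu> = (\<mu> - single j d) + single j d"
      by (rule poly_mapping_eqI) (use j in \<open>auto simp add: lookup_add lookup_minus lookup_single when_def\<close>)
    then have "single \<mu> c = single (\<mu> - single j d) c * (var j ^ d :: 'k poly5)"
      by (simp add: var_pow mult_single)
    moreover have "var j ^ d \<in> ?G" by (rule UnI1, rule CollectI, rule exI[of _ j], simp)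
    ultimately show ?thesis unfolding the_ideal_def by (simp only: ig_gen)
  next
    case False
    then have j: "(d+1) div 2 \<le> lookup \<mu> 0" "d div 2 \<le> lookup \<mu> 1" using assms inI_def by auto
    let ?m = "single 0 ((d+1) div 2) + single 1 (d div 2) :: 5 \<Rightarrow>\<^sub>0 nat"
    have "\<mu> = (\<mu> - ?m) + ?m"
      by (rule poly_mapping_eqI) (use j in \<open>auto simp add: lookup_add lookup_minus lookup_single when_def dist5\<close>)
    then have "single \<mu> c = single (\<mu> - ?m) c * (var 0 ^ ((d + 1) div 2) * var 1 ^ (d div 2) :: 'k poly5)"
      by (simp add: var_pow mult_single)
    moreover have "var 0 ^ ((d + 1) div 2) * var 1 ^ (d div 2) \<in> ?G" by (rule UnI2, simp)
    ultimately show ?thesis unfolding the_ideal_def by (simp only: ig_gen)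
  qed
qed

lemma keys_in_ideal:
  assumes "\<And>\<mu>. \<mu> \<in> keys h \<Longrightarrow> inI d \<mu>"
  shows "h \<in> (the_ideal d :: 'k::comm_ring_1 poly5 set)"
proof -
  have "(\<Sum>\<mu>\<in>keys h. single \<mu> (lookup h \<mu>)) \<in> (the_ideal d :: 'k poly5 set)"
    unfolding the_ideal_def by (rule ig_sum) (use assms single_in_ideal in \<open>auto simp: the_ideal_def\<close>)
  then show ?thesis using poly_sum_single[of h] by simp
qed



abbreviation ev :: "5 \<Rightarrow> (5 \<Rightarrow>\<^sub>0 nat)" where "ev i \<equiv> single i 1"

lemma Dop_fin: "finite {\<nu>. (\<Sum>i\<in>UNIV. of_nat (lookup \<nu> i + 1) * lookup (p::'k::comm_ring_1 poly5) (\<nu> + ev i)) \<noteq> 0}"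
proof -
  have "{\<nu>. (\<Sum>i\<in>UNIV. of_nat (lookup \<nu> i + 1) * lookup p (\<nu> + ev i)) \<noteq> 0}
        \<subseteq> (\<Union>i. (\<lambda>\<mu>. \<mu> - ev i) ` keys p)"
  proof
    fix \<nu> assume "\<nu> \<in> {\<nu>. (\<Sum>i\<in>UNIV. of_nat (lookup \<nu> i + 1) * lookup p (\<nu> + ev i)) \<noteq> 0}"
    then obtain i where "of_nat (lookup \<nu> i + 1) * lookup p (\<nu> + ev i) \<noteq> 0"
      by (metis (mono_tags, lifting) mem_Collect_eq sum.neutral)
    then have "\<nu> + ev i \<in> keys p" by (auto simp: in_keys_iff)
    moreover have "\<nu> = (\<nu> + ev i) - ev i" by simp
    ultimately show "\<nu> \<in> (\<Union>i. (\<lambda>\<mu>. \<mu> - ev i) ` keys p)" by blast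
  qed
  moreover have "finite (\<Union>i. (\<lambda>\<mu>. \<mu> - ev i) ` keys p)" by simp
  ultimately show ?thesis by (rule finite_subset)
qed

definition Dop :: "'k::comm_ring_1 poly5 \<Rightarrow> 'k poly5" where
  "Dop p = Abs_poly_mapping (\<lambda>\<nu>. \<Sum>i\<in>UNIV. of_nat (lookup \<nu> i + 1) * lookup p (\<nu> + ev i))"

lemma lookup_Dop: "lookup (Dop p) \<nu> = (\<Sum>i\<in>UNIV. of_nat (lookup \<nu> i + 1) * lookup p (\<nu> + ev i))"
  unfolding Dop_def using Dop_fin[of p] by simp

lemma Dop_add: "Dop (p + q) = Dop p + Dop q"
  by (rule poly_mapping_eqI) (simp add: lookup_Dop lookup_add distrib_left sum.distrib)

lemma Dop_diff: "Dop (p - q) = Dop p - Dop q"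
  by (rule poly_mapping_eqI) (simp add: lookup_Dop lookup_minus right_diff_distrib sum_subtractf)

lemma Dop_zero: "Dop 0 = 0"
  by (rule poly_mapping_eqI) (simp add: lookup_Dop)

lemma Dop_sum: "Dop (sum f A) = (\<Sum>a\<in>A. Dop (f a))"
  by (induction A rule: infinite_finite_induct) (simp_all add: Dop_zero Dop_add)

lemma ev_sub: "\<mu> = \<nu> + ev i \<Longrightarrow> \<mu> - ev i = \<nu>"
  by simp

lemma ev_add_back: "\<mu> - ev i = \<nu> \<Longrightarrow> 1 \<le> lookup \<mu> i \<Longrightarrow> \<mu> = \<nu> + ev i"
  by (rule poly_mapping_eqI) (auto simp: lookup_add lookup_minus lookup_single when_def)

lemma Dop_single:
  "Dop (single \<mu> (c::'k::comm_ring_1)) = (\<Sum>i\<in>UNIV. single (\<mu> - ev i) (of_nat (lookup \<mu> i) * c))"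
proof (rule poly_mapping_eqI)
  fix \<nu>
  have "of_nat (lookup \<nu> i + 1) * (c when \<mu> = \<nu> + ev i) = (of_nat (lookup \<mu> i) * c when \<mu> - ev i = \<nu>)" for i
  proof (cases "\<mu> = \<nu> + ev i")
    case True
    then show ?thesis by (simp add: lookup_add)
  next
    case False
    show ?thesis
    proof (cases "\<mu> - ev i = \<nu>")
      case True
      have "lookup \<mu> i = 0"
      proof (rule ccontr)
        assume "lookup \<mu> i \<noteq> 0"
        then have "1 \<le> lookup \<mu> i" by simp
        then show False using ev_add_back[OF True] False by simp
      qed
      then show ?thesis using False by simp
    next
      case F2: False
      then show ?thesis using False by simp
    qed
  qed
  then show "lookup (Dop (single \<mu> c)) \<nu> = lookup (\<Sum>i\<in>UNIV. single (\<mu> - ev i) (of_nat (lookup \<mu> i) * c)) \<nu>"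
    by (simp add: lookup_Dop lookup_sum lookup_single)
qed

lemma sub_e1: "1 \<le> lookup \<alpha> i \<Longrightarrow> \<alpha> - ev i + \<beta> = \<alpha> + \<beta> - ev i"
  by (rule poly_mapping_eqI) (auto simp: lookup_add lookup_minus lookup_single when_def)
lemma sub_e2: "1 \<le> lookup \<beta> i \<Longrightarrow> \<alpha> + (\<beta> - ev i) = \<alpha> + \<beta> - ev i"
  by (rule poly_mapping_eqI) (auto simp: lookup_add lookup_minus lookup_single when_def)

lemma Dop_mono_rule:
  "Dop (single \<mu> a * single \<nu> b) = Dop (single \<mu> a) * single \<nu> b + single \<mu> (a::'k::comm_ring_1) * Dop (single \<nu> b)"
proof -
  have tm: "single (\<mu> + \<nu> - ev i) (of_nat (lookup (\<mu> + \<nu>) i) * (a * b)) =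
     single (\<mu> - ev i + \<nu>) (of_nat (lookup \<mu> i) * a * b) + single (\<mu> + (\<nu> - ev i)) (a * (of_nat (lookup \<nu> i) * b))" for i
  proof (cases "lookup \<mu> i = 0")
    case True
    show ?thesis
    proof (cases "lookup \<nu> i = 0")
      case True
      then show ?thesis using \<open>lookup \<mu> i = 0\<close> by (simp add: lookup_add)
    next
      case False
      then show ?thesis using True sub_e2[of \<nu> i \<mu>] by (simp add: lookup_add mult.left_commute)
    qed
  next
    case F1: False
    show ?thesis
    proof (cases "lookup \<nu> i = 0")
      case True
      then show ?thesis using F1 sub_e1[of \<mu> i \<nu>] by (simp add: lookup_add mult.assoc)
    next
      case False
      then show ?thesis using F1 sub_e1[of \<mu> i \<nu>] sub_e2[of \<nu> i \<mu>]
        by (simp add: lookup_add single_add[symmetric] algebra_simps)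
    qed
  qed
  have "Dop (single \<mu> a * single \<nu> b) = (\<Sum>i\<in>UNIV. single (\<mu> + \<nu> - ev i) (of_nat (lookup (\<mu> + \<nu>) i) * (a * b)))"
    by (simp only: mult_single Dop_single)
  also have "\<dots> = (\<Sum>i\<in>UNIV. single (\<mu> - ev i + \<nu>) (of_nat (lookup \<mu> i) * a * b) + single (\<mu> + (\<nu> - ev i)) (a * (of_nat (lookup \<nu> i) * b)))"
    by (rule sum.cong[OF refl], rule tm)
  also have "\<dots> = Dop (single \<mu> a) * single \<nu> b + single \<mu> a * Dop (single \<nu> b)"
    by (simp only: Dop_single sum_distrib_left sum_distrib_right mult_single sum.distrib)
  finally show ?thesis .
qed

lemma sum_sum_single: "(\<Sum>\<mu>\<in>keys p. single \<mu> (lookup p \<mu>)) = p"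
  using poly_sum_single[of p] by simp

lemma Dop_mult: "Dop (p * q) = Dop p * q + p * Dop (q::'k::comm_ring_1 poly5)"
proof -
  let ?P = "\<lambda>\<mu>. single \<mu> (lookup p \<mu>)" and ?Q = "\<lambda>\<nu>. single \<nu> (lookup q \<nu>)"
  have "Dop (p * q) = Dop ((\<Sum>\<mu>\<in>keys p. ?P \<mu>) * (\<Sum>\<nu>\<in>keys q. ?Q \<nu>))"
    by (simp only: sum_sum_single)
  also have "\<dots> = (\<Sum>\<mu>\<in>keys p. \<Sum>\<nu>\<in>keys q. Dop (?P \<mu> * ?Q \<nu>))"
    by (simp only: sum_product Dop_sum)
  also have "\<dots> = (\<Sum>\<mu>\<in>keys p. \<Sum>\<nu>\<in>keys q. Dop (?P \<mu>) * ?Q \<nu> + ?P \<mu> * Dop (?Q \<nu>))"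
    by (simp only: Dop_mono_rule)
  also have "\<dots> = (\<Sum>\<mu>\<in>keys p. Dop (?P \<mu>)) * (\<Sum>\<nu>\<in>keys q. ?Q \<nu>) + (\<Sum>\<mu>\<in>keys p. ?P \<mu>) * (\<Sum>\<nu>\<in>keys q. Dop (?Q \<nu>))"
    by (simp only: sum.distrib sum_product)
  also have "\<dots> = Dop p * q + p * Dop q"
    by (simp only: Dop_sum[symmetric] sum_sum_single)
  finally show ?thesis .
qed

lemma Dop_one: "Dop (1::'k::comm_ring_1 poly5) = 0"
proof -
  have "Dop (1::'k poly5) = Dop (single 0 1)" by (simp only: single_one)
  also have "\<dots> = 0" by (simp only: Dop_single lookup_zero of_nat_0 mult_zero_left single_zero sum.neutral_const)
  finally show ?thesis .
qed

lemma Dop_var: "Dop (var j :: 'k::comm_ring_1 poly5) = 1"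
proof -
  have "Dop (var j :: 'k poly5) = (\<Sum>i\<in>UNIV. if i = j then 1 else 0)"
    unfolding var_single Dop_single
    by (rule sum.cong) (auto simp: lookup_single)
  then show ?thesis by simp
qed

lemma Dop_mult0: "Dop p = 0 \<Longrightarrow> Dop q = 0 \<Longrightarrow> Dop (p * q) = (0::'k::comm_ring_1 poly5)"
  by (simp add: Dop_mult)

lemma Dop_pow0: "Dop p = 0 \<Longrightarrow> Dop (p ^ n) = (0::'k::comm_ring_1 poly5)"
  by (induction n) (simp_all add: Dop_one Dop_mult0)

lemma Dop_vdiff: "Dop (var i - var j) = (0::'k::comm_ring_1 poly5)"
  by (simp add: Dop_diff Dop_var)



definition Wf :: "(5 \<Rightarrow>\<^sub>0 nat) \<Rightarrow> 'k::comm_ring_1" where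
  "Wf \<mu> = (\<Prod>j\<in>UNIV. of_nat (fact (lookup \<mu> j)))"

definition Pf :: "'k::comm_ring_1 poly5 \<Rightarrow> 'k poly5 \<Rightarrow> 'k" where
  "Pf \<Phi> p = (\<Sum>\<mu>\<in>keys \<Phi>. lookup p \<mu> * Wf \<mu> * lookup \<Phi> \<mu>)"

lemma Pf_add: "Pf \<Phi> (p + q) = Pf \<Phi> p + Pf \<Phi> q"
  by (simp add: Pf_def lookup_add distrib_right sum.distrib)

lemma Pf_zero: "Pf \<Phi> 0 = 0"
  by (simp add: Pf_def)

lemma Pf_sum: "Pf \<Phi> (sum f A) = (\<Sum>a\<in>A. Pf \<Phi> (f a))"
  by (induction A rule: infinite_finite_induct) (simp_all add: Pf_zero Pf_add)

lemma Pf_single: "Pf \<Phi> (single \<mu> c) = c * Wf \<mu> * lookup \<Phi> \<mu>"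
proof (cases "\<mu> \<in> keys \<Phi>")
  case True
  have "Pf \<Phi> (single \<mu> c) = (\<Sum>\<mu>'\<in>keys \<Phi>. if \<mu>' = \<mu> then c * Wf \<mu> * lookup \<Phi> \<mu> else 0)"
    unfolding Pf_def by (rule sum.cong) (auto simp: lookup_single)
  then show ?thesis using True by simp
next
  case False
  then have "Pf \<Phi> (single \<mu> c) = 0"
    unfolding Pf_def by (intro sum.neutral) (auto simp: lookup_single when_def)
  then show ?thesis using False by (simp add: in_keys_iff)
qed

lemma Wf_add_e: "Wf (\<nu> + ev i) = of_nat (lookup \<nu> i + 1) * (Wf \<nu> :: 'k::comm_ring_1)"
proof -
  have "Wf (\<nu> + ev i) = (of_nat (fact (lookup \<nu> i + 1)) :: 'k) * (\<Prod>j\<in>UNIV - {i}. of_nat (fact (lookup (\<nu> + ev i) j)))"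
    unfolding Wf_def by (subst prod.remove[of UNIV i]) (simp_all add: lookup_add)
  also have "(\<Prod>j\<in>UNIV - {i}. (of_nat (fact (lookup (\<nu> + ev i) j)) :: 'k)) = (\<Prod>j\<in>UNIV - {i}. of_nat (fact (lookup \<nu> j)))"
    by (rule prod.cong) (auto simp: lookup_add lookup_single)
  also have "(Wf \<nu> :: 'k) = of_nat (fact (lookup \<nu> i)) * (\<Prod>j\<in>UNIV - {i}. of_nat (fact (lookup \<nu> j)))"
    unfolding Wf_def by (subst prod.remove[of UNIV i]) simp_all
  ultimately show ?thesis by (simp add: fact_Suc algebra_simps)
qed

lemma L_single: "lin_form * single \<nu> c = (\<Sum>i\<in>UNIV. single (ev i + \<nu>) (c::'k::comm_ring_1))"
  by (simp add: lin_form_def sum_distrib_right var_single mult_single)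

lemma Pf_L_single: "Pf \<Phi> (lin_form * single \<nu> c) = c * Wf \<nu> * lookup (Dop \<Phi>) \<nu>"
proof -
  have "Pf \<Phi> (lin_form * single \<nu> c) = (\<Sum>i\<in>UNIV. c * Wf (\<nu> + ev i) * lookup \<Phi> (\<nu> + ev i))"
    by (simp add: L_single Pf_sum Pf_single add.commute)
  also have "\<dots> = (\<Sum>i\<in>UNIV. c * Wf \<nu> * (of_nat (lookup \<nu> i + 1) * lookup \<Phi> (\<nu> + ev i)))"
    by (rule sum.cong[OF refl]) (simp only: Wf_add_e, simp add: algebra_simps)
  also have "\<dots> = c * Wf \<nu> * lookup (Dop \<Phi>) \<nu>"
    by (simp add: lookup_Dop sum_distrib_left)
  finally show ?thesis .
qed

lemma Pf_L: "Dop \<Phi> = 0 \<Longrightarrow> Pf \<Phi> (lin_form * f) = 0"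
proof -
  assume D: "Dop \<Phi> = 0"
  have "Pf \<Phi> (lin_form * f) = Pf \<Phi> (lin_form * (\<Sum>\<mu>\<in>keys f. single \<mu> (lookup f \<mu>)))"
    by (simp only: sum_sum_single)
  also have "\<dots> = (\<Sum>\<mu>\<in>keys f. Pf \<Phi> (lin_form * single \<mu> (lookup f \<mu>)))"
    by (simp only: sum_distrib_left Pf_sum)
  also have "\<dots> = 0" by (simp add: Pf_L_single D)
  finally show ?thesis .
qed

lemma Pf_ideal:
  assumes "\<forall>\<mu>\<in>keys \<Phi>. \<not> inI d \<mu>" "h \<in> the_ideal d"
  shows "Pf \<Phi> h = 0"
  unfolding Pf_def
proof (rule sum.neutral, rule ballI)
  fix \<mu> assume "\<mu> \<in> keys \<Phi>"
  then have "\<mu> \<notin> keys h" using assms ideal_keys by metis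
  then show "lookup h \<mu> * Wf \<mu> * lookup \<Phi> \<mu> = 0" by (simp add: in_keys_iff)
qed

lemma Wf_nz: "(Wf \<mu> :: 'k::field_char_0) \<noteq> 0"
  unfolding Wf_def by (simp add: prod_zero_iff)

lemma nonsurj_core:
  fixes \<Phi> :: "'k::field_char_0 poly5"
  assumes D: "Dop \<Phi> = 0" and nz: "\<Phi> \<noteq> 0" and hom: "homogeneous \<Phi> (Suc i)"
    and ni: "\<forall>\<mu>\<in>keys \<Phi>. \<not> inI d \<mu>"
  shows "\<not> mult_L_surjective (the_ideal d :: 'k::field_char_0 poly5 set) i"
proof
  assume surj: "mult_L_surjective (the_ideal d :: 'k poly5 set) i"
  obtain \<mu>0 where m0: "\<mu>0 \<in> keys \<Phi>"
  proof -
    have "keys \<Phi> \<noteq> {}"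
    proof
      assume "keys \<Phi> = {}"
      then have "\<Phi> = 0" by (intro poly_mapping_eqI) (auto simp: in_keys_iff)
      then show False using nz by simp
    qed
    then show ?thesis using that by blast
  qed
  have "homogeneous (single \<mu>0 (1::'k)) (Suc i)"
    using hom m0 by (simp add: homogeneous_def)
  then obtain f h where fh: "h \<in> the_ideal d" "single \<mu>0 (1::'k) = lin_form * f + h"
    using surj unfolding mult_L_surjective_def by blast
  have "Pf \<Phi> (single \<mu>0 1) = Pf \<Phi> (lin_form * f) + Pf \<Phi> h"
    by (simp only: fh(2) Pf_add)
  also have "\<dots> = 0" using Pf_L[OF D] Pf_ideal[OF ni fh(1)] by simp
  finally have "Wf \<mu>0 * lookup \<Phi> \<mu>0 = (0::'k)" by (simp add: Pf_single)
  moreover have "(Wf \<mu>0 :: 'k) \<noteq> 0" by (rule Wf_nz)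
  ultimately show False using m0 by (simp add: in_keys_iff)
qed



lemma hw_vd: "l (ev a) = c \<Longrightarrow> l (ev b) = c \<Longrightarrow> hw l (var a - var b :: 'k::comm_ring_1 poly5) c"
  by (intro hw_diff) (metis hw_var)+

lemma bw_vd: "bw (\<lambda>\<mu>. lookup \<mu> j) (var a - var b :: 'k::comm_ring_1 poly5) (lookup (ev a) j + lookup (ev b) j)"
  by (intro bw_diff hw_bw[OF hw_var]) simp_all

lemma hw_plus: "hw l p a \<Longrightarrow> hw m p b \<Longrightarrow> hw (\<lambda>\<mu>. l \<mu> + m \<mu>) p (a + b)"
  by (simp add: hw_def)

lemma vd_nz: "i \<noteq> j \<Longrightarrow> (var i - var j :: 'k::field poly5) \<noteq> 0"
proof
  assume ij: "i \<noteq> j" and z: "var i - var j = (0::'k poly5)"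
  have "ev i \<noteq> ev j"
  proof
    assume "ev i = ev j"
    then have "lookup (ev i) i = lookup (ev j) i" by simp
    then show False using ij by (simp add: lookup_single)
  qed
  then have "lookup (var i - var j :: 'k poly5) (ev i) = 1" by (simp add: var_single lookup_minus lookup_single)
  then show False using z by simp
qed

definition Delta :: "'k::comm_ring_1 poly5" where
  "Delta = (var 2 - var 3) * (var 3 - var 4) * (var 4 - var 2)"

lemma Dop_Delta: "Dop Delta = 0"
  unfolding Delta_def by (intro Dop_mult0 Dop_vdiff)

lemma Delta_nz: "(Delta :: 'k::field poly5) \<noteq> 0"
proof -
  have a: "var 2 - var 3 \<noteq> (0::'k poly5)" by (rule vd_nz) (simp add: dist5)
  have b: "var 3 - var 4 \<noteq> (0::'k poly5)" by (rule vd_nz) (simp add: dist5)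
  have c: "var 4 - var 2 \<noteq> (0::'k poly5)" by (rule vd_nz) (simp add: dist5[symmetric])
  show ?thesis unfolding Delta_def using a b c by (metis mult_eq_0_iff)
qed

lemma Delta_hom: "hw mdeg (Delta :: 'k::comm_ring_1 poly5) 3"
proof -
  have "hw mdeg (Delta :: 'k poly5) (1 + 1 + 1)"
    unfolding Delta_def by (intro hw_mult addf_mdeg hw_vd) (simp_all add: mdeg_single)
  then show ?thesis by (simp add: numeral_3_eq_3)
qed

lemma Delta_lk01: "hw (\<lambda>\<mu>. lookup \<mu> 0 + lookup \<mu> 1) (Delta :: 'k::comm_ring_1 poly5) 0"
proof -
  have "hw (\<lambda>\<mu>. lookup \<mu> 0 + lookup \<mu> 1) (Delta :: 'k poly5) (0 + 0 + 0)"
    unfolding Delta_def by (intro hw_mult addf_plus addf_lk hw_vd) (simp_all add: lookup_single dist5)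
  then show ?thesis by simp
qed

lemma Delta_bw: "j \<in> {2,3,4} \<Longrightarrow> bw (\<lambda>\<mu>. lookup \<mu> j) (Delta :: 'k::comm_ring_1 poly5) 2"
proof -
  assume j: "j \<in> {2,3,4}"
  have "bw (\<lambda>\<mu>. lookup \<mu> j) (Delta :: 'k poly5)
     ((lookup (ev 2) j + lookup (ev 3) j) + (lookup (ev 3) j + lookup (ev 4) j) + (lookup (ev 4) j + lookup (ev 2) j))"
    unfolding Delta_def by (intro bw_mult addf_lk bw_vd)
  moreover have "(lookup (ev 2) j + lookup (ev 3) j) + (lookup (ev 3) j + lookup (ev 4) j) + (lookup (ev 4) j + lookup (ev 2) j) = 2"
    using j by (auto simp: lookup_single dist5 dist5[symmetric])
  ultimately show ?thesis by simp
qed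

lemma nonsurj_Phi:
  fixes G :: "'k::field_char_0 poly5"
  assumes DG: "Dop G = 0" and Gnz: "G \<noteq> 0" and Ghom: "hw mdeg G g0"
    and G0: "hw (\<lambda>\<mu>. lookup \<mu> 0 + lookup \<mu> 1) G 0"
    and Gb: "\<And>j. j \<in> {2,3,4} \<Longrightarrow> bw (\<lambda>\<mu>. lookup \<mu> j) G gb"
    and ar: "2 * k + gb \<le> d - 1" "1 \<le> d" "Suc i = (d - 1) + 3 * k + g0"
  shows "\<not> mult_L_surjective (the_ideal d :: 'k poly5 set) i"
proof -
  define \<Phi> :: "'k poly5" where "\<Phi> = (var 0 - var 1) ^ (d - 1) * Delta ^ k * G"
  have D: "Dop \<Phi> = 0" unfolding \<Phi>_def
    by (intro Dop_mult0 Dop_pow0 Dop_vdiff Dop_Delta DG)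
  have a: "var 0 - var 1 \<noteq> (0::'k poly5)" by (rule vd_nz) (simp add: dist5)
  have nz: "\<Phi> \<noteq> 0" unfolding \<Phi>_def
    using a Delta_nz[where 'k='k] Gnz by (metis mult_eq_0_iff power_not_zero)
  have "hw mdeg \<Phi> ((d - 1) * 1 + k * 3 + g0)" unfolding \<Phi>_def
    by (intro hw_mult hw_pow addf_mdeg hw_vd Delta_hom Ghom) (simp_all add: mdeg_single)
  then have hom: "homogeneous \<Phi> (Suc i)" using ar(3) by (simp add: homogeneous_hw mult.commute)
  have h01: "hw (\<lambda>\<mu>. lookup \<mu> 0 + lookup \<mu> 1) \<Phi> ((d - 1) * 1 + k * 0 + 0)" unfolding \<Phi>_def
    by (intro hw_mult hw_pow addf_plus addf_lk hw_vd Delta_lk01 G0) (simp_all add: lookup_single dist5)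
  have hj: "bw (\<lambda>\<mu>. lookup \<mu> j) \<Phi> ((d - 1) * 0 + k * 2 + gb)" if j: "j \<in> {2,3,4}" for j
    unfolding \<Phi>_def
  proof (intro bw_mult bw_pow addf_lk Delta_bw Gb j)
    show "bw (\<lambda>\<mu>. lookup \<mu> j) (var 0 - var 1 :: 'k poly5) 0"
      using bw_vd[of j 0 1] j by (auto simp: lookup_single dist5 dist5[symmetric])
  qed
  have ni: "\<forall>\<mu>\<in>keys \<Phi>. \<not> inI d \<mu>"
  proof
    fix \<mu> assume m: "\<mu> \<in> keys \<Phi>"
    have s01: "lookup \<mu> 0 + lookup \<mu> 1 = d - 1" using h01 m by (simp add: hw_def)
    have b: "lookup \<mu> j \<le> d - 1" if "j \<in> {2,3,4}" for j
      using hj[OF that] m ar(1) by (auto simp: bw_def)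
    have "\<not> (d \<le> lookup \<mu> j)" for j
      using j5[of j] s01 b[of 2] b[of 3] b[of 4] ar(2) by auto
    moreover have "\<not> ((d+1) div 2 \<le> lookup \<mu> 0 \<and> d div 2 \<le> lookup \<mu> 1)"
      using s01 ar(2) by linarith
    ultimately show "\<not> inI d \<mu>" unfolding inI_def by blast
  qed
  show ?thesis by (rule nonsurj_core[OF D nz hom ni])
qed



lemma nonsurj_main:
  assumes d: "5 \<le> d"
  shows "\<not> mult_L_surjective (the_ideal d :: 'k::field_char_0 poly5 set) ((5 * d - 5) div 2 - 1)"
proof (cases "even d")
  case False
  then obtain e where e: "d = 2 * e + 1" by (metis oddE)
  have l01: "addf (\<lambda>\<mu>. lookup \<mu> 0 + lookup \<mu> 1)" by (intro addf_plus addf_lk)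
  have a1: "Dop (1::'k poly5) = 0" by (rule Dop_one)
  have a2: "(1::'k poly5) \<noteq> 0" by simp
  have a3: "hw mdeg (1::'k poly5) 0" by (rule hw_one[OF addf_mdeg])
  have a4: "hw (\<lambda>\<mu>. lookup \<mu> 0 + lookup \<mu> 1) (1::'k poly5) 0" by (rule hw_one[OF l01])
  have a5: "\<And>j. j \<in> {2,3,4} \<Longrightarrow> bw (\<lambda>\<mu>. lookup \<mu> j) (1::'k poly5) 0"
    using hw_bw[OF hw_one[OF addf_lk]] by blast
  have a6: "2 * e + 0 \<le> d - 1" "1 \<le> d" using e by simp_all
  have a7: "Suc ((5 * d - 5) div 2 - 1) = d - 1 + 3 * e + 0" using e d by simp
  show ?thesis by (rule nonsurj_Phi[OF a1 a2 a3 a4 a5 a6 a7])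
next
  case True
  then obtain e where e: "d = 2 * e" by (metis evenE)
  have l01: "addf (\<lambda>\<mu>. lookup \<mu> 0 + lookup \<mu> 1)" by (intro addf_plus addf_lk)
  have a1: "Dop (var 2 - var 3 :: 'k poly5) = 0" by (rule Dop_vdiff)
  have a2: "(var 2 - var 3 :: 'k poly5) \<noteq> 0" by (rule vd_nz) (simp add: dist5)
  have a3: "hw mdeg (var 2 - var 3 :: 'k poly5) 1" by (rule hw_vd) (simp_all add: mdeg_single)
  have a4: "hw (\<lambda>\<mu>. lookup \<mu> 0 + lookup \<mu> 1) (var 2 - var 3 :: 'k poly5) 0"
    by (rule hw_vd) (simp_all add: lookup_single dist5)
  have a5: "bw (\<lambda>\<mu>. lookup \<mu> j) (var 2 - var 3 :: 'k poly5) 1" if "j \<in> {2,3,4}" for j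
    using bw_vd[of j 2 3] that by (auto simp: lookup_single dist5 dist5[symmetric] elim: bw_mono)
  have a6: "2 * (e - 1) + 1 \<le> d - 1" "1 \<le> d" using e d by simp_all
  have a7: "Suc ((5 * d - 5) div 2 - 1) = d - 1 + 3 * (e - 1) + 1" using e d by simp
  show ?thesis by (rule nonsurj_Phi[OF a1 a2 a3 a4 a5 a6 a7])
qed



lemma LC: "lookup (single 0 c * (q::'k::comm_ring_1 poly5)) \<mu> = c * lookup q \<mu>"
  using LM1[of q 0 c \<mu>] by (simp add: mult.commute)

lemma ker23':
  fixes a b c p q r :: "'k::field"
  obtains x y z where "x \<noteq> 0 \<or> y \<noteq> 0 \<or> z \<noteq> 0" "a*x + b*y + c*z = 0" "p*x + q*y + r*z = 0"
proof -
  have "\<exists>x y z. (x \<noteq> 0 \<or> y \<noteq> 0 \<or> z \<noteq> 0) \<and> a*x + b*y + c*z = 0 \<and> p*x + q*y + r*z = 0"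
  proof (cases "b*r - c*q \<noteq> 0 \<or> c*p - a*r \<noteq> 0 \<or> a*q - b*p \<noteq> 0")
    case True
    show ?thesis
      by (rule exI[of _ "b*r - c*q"], rule exI[of _ "c*p - a*r"], rule exI[of _ "a*q - b*p"])
        (use True in \<open>simp add: algebra_simps\<close>)
  next
    case False
    then have c1: "b*r = c*q" "c*p = a*r" "a*q = b*p" by auto
    show ?thesis
    proof (cases "a = 0 \<and> b = 0 \<and> c = 0")
      case True
      show ?thesis
      proof (cases "p = 0")
        case True
        then show ?thesis using \<open>a = 0 \<and> b = 0 \<and> c = 0\<close>
          by (intro exI[of _ 1] exI[of _ 0]) simp
      next
        case False
        then show ?thesis using \<open>a = 0 \<and> b = 0 \<and> c = 0\<close>
          by (intro exI[of _ "-q"] exI[of _ p] exI[of _ 0]) (simp add: algebra_simps)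
      qed
    next
      case nz: False
      show ?thesis
      proof (cases "a = 0")
        case True
        then have "p = 0" using nz c1 by auto
        then show ?thesis using True by (intro exI[of _ 1] exI[of _ 0]) simp
      next
        case False
        then show ?thesis using c1
          by (intro exI[of _ "-b"] exI[of _ a] exI[of _ 0]) (simp add: algebra_simps)
      qed
    qed
  qed
  then show ?thesis using that by blast
qed

lemma lookup_y_pow:
  assumes "1 \<le> d"
  shows "lookup ((var 3 + var 4 :: 'k::comm_ring_1 poly5) ^ (2*d-2)) (single 3 (d-1) + single 4 (d-1))
         = of_nat ((2*d-2) choose (d-1))"
proof -
  let ?m = "2*d-2" and ?\<kappa> = "single 3 (d-1) + single 4 (d-1) :: 5 \<Rightarrow>\<^sub>0 nat"
  have "(var 3 + var 4 :: 'k poly5) ^ ?m = (\<Sum>k\<le>?m. single 0 (of_nat (?m choose k)) * single (single 3 k + single 4 (?m - k)) 1)"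
    by (simp add: binomial_ring var_pow mult_single mult.assoc)
  then have "lookup ((var 3 + var 4 :: 'k poly5) ^ ?m) ?\<kappa> = (\<Sum>k\<le>?m. of_nat (?m choose k) * lookup (single (single 3 k + single 4 (?m - k)) (1::'k)) ?\<kappa>)"
    by (simp only: lookup_sum LC)
  also have "\<dots> = (\<Sum>k\<le>?m. if k = d - 1 then of_nat (?m choose k) else 0)"
  proof (rule sum.cong[OF refl])
    fix k assume k: "k \<in> {..?m}"
    have "(single 3 k + single 4 (?m - k) = ?\<kappa>) \<longleftrightarrow> k = d - 1"
    proof
      assume "single 3 k + single 4 (?m - k) = ?\<kappa>"
      then have "lookup (single 3 k + single 4 (?m - k)) (3::5) = lookup ?\<kappa> 3" by simp
      then show "k = d - 1" by (simp add: lookup_add lookup_single dist5)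
    next
      assume "k = d - 1"
      then show "single 3 k + single 4 (?m - k) = ?\<kappa>" using assms by (simp add: numeral_2_eq_2)
    qed
    then show "of_nat (?m choose k) * lookup (single (single 3 k + single 4 (?m - k)) (1::'k)) ?\<kappa> =
         (if k = d - 1 then of_nat (?m choose k) else 0)"
      by (simp add: lookup_single when_def)
  qed
  also have "\<dots> = of_nat (?m choose (d-1))" using assms by simp
  finally show ?thesis .
qed

lemma hw_var_c: "l (single j 1) = c \<Longrightarrow> hw l (var j :: 'k::comm_ring_1 poly5) c"
  using hw_var[of l j] by simp

lemma mdeg_zero: "mdeg 0 = 0" by (simp add: mdeg_def)

lemma noninj_core:
  fixes \<beta>1 \<beta>2 :: "5 \<Rightarrow>\<^sub>0 nat"
  assumes d: "5 \<le> d" and D0: "1 \<le> D0" "D0 < d div 2"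
    and cls: "\<And>\<mu>. lookup \<mu> 3 = 0 \<Longrightarrow> lookup \<mu> 4 = 0 \<Longrightarrow> mdeg \<mu> = (2*d-1) + D0 \<Longrightarrow> \<not> inI d \<mu> \<Longrightarrow> \<mu> = \<beta>1 \<or> \<mu> = \<beta>2"
  shows "\<not> mult_L_injective (the_ideal d :: 'k::field_char_0 poly5 set) (D0 + 2*d - 2)"
proof -
  define s :: "'k poly5" where "s = var 0 + var 1 + var 2"
  define y :: "'k poly5" where "y = var 3 + var 4"
  define n where "n = 2*d - 1"
  define m :: "5 \<Rightarrow> 'k poly5" where "m i = var i ^ D0" for i
  define r where "r \<beta> i = lookup (s^n * m i) \<beta>" for \<beta> i
  obtain x1 x2 x3 :: 'k where xs: "x1 \<noteq> 0 \<or> x2 \<noteq> 0 \<or> x3 \<noteq> 0"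
    "r \<beta>1 0 * x1 + r \<beta>1 1 * x2 + r \<beta>1 2 * x3 = 0" "r \<beta>2 0 * x1 + r \<beta>2 1 * x2 + r \<beta>2 2 * x3 = 0"
    by (rule ker23')
  define c :: "5 \<Rightarrow> 'k" where "c i = (if i = 0 then x1 else if i = 1 then x2 else x3)" for i
  define I3 where "I3 = {0,1,2::5}"
  define w :: "'k poly5" where "w = (\<Sum>i\<in>I3. single 0 (c i) * m i)"
  define f :: "'k poly5" where "f = (\<Sum>j<n. (-s)^(n - Suc j) * y^j * w)"
  have lw: "lookup (q * w) \<mu> = (\<Sum>i\<in>I3. c i * lookup (q * m i) \<mu>)" for q \<mu>
  proof -
    have "q * w = (\<Sum>i\<in>I3. single 0 (c i) * (q * m i))"
      unfolding w_def by (simp add: sum_distrib_left mult.left_commute)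
    then show ?thesis by (simp only: lookup_sum LC)
  qed
  have sumI3: "(\<Sum>i\<in>I3. g i) = g 0 + g 1 + g 2" for g :: "5 \<Rightarrow> 'k"
    unfolding I3_def by (simp add: dist5 add.assoc)
  have hs: "hw mdeg s 1" unfolding s_def by (intro hw_add hw_var_c) (simp_all add: mdeg_single)
  have hy: "hw mdeg y 1" unfolding y_def by (intro hw_add hw_var_c) (simp_all add: mdeg_single)
  have hw': "hw mdeg w D0" unfolding w_def m_def
  proof (rule hw_sum)
    fix i
    have "hw mdeg (single 0 (c i) * var i ^ D0 :: 'k poly5) (0 + D0 * 1)"
      by (intro hw_mult hw_pow addf_mdeg hw_var_c) (simp_all add: mdeg_single hw_single[of mdeg 0, simplified mdeg_zero])
    then show "hw mdeg (single 0 (c i) * var i ^ D0) D0" by simp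
  qed
  have hf: "homogeneous f (D0 + 2*d - 2)" unfolding homogeneous_hw f_def
  proof (rule hw_sum)
    fix j assume "j \<in> {..<n}"
    then have "(n - Suc j) * 1 + j * 1 + D0 = D0 + 2*d - 2" using d by (simp add: n_def)
    moreover have "hw mdeg ((-s)^(n - Suc j) * y^j * w) ((n - Suc j) * 1 + j * 1 + D0)"
      by (intro hw_mult hw_pow hw_uminus addf_mdeg hs hy hw')
    ultimately show "hw mdeg ((-s)^(n - Suc j) * y^j * w) (D0 + 2*d - 2)" by simp
  qed
  have Lf: "lin_form * f = (y^n + s^n) * w"
  proof -
    have L: "lin_form = y - (-s)" by (simp add: lin_form5 s_def y_def algebra_simps)
    have on: "odd n" using d by (simp add: n_def)
    have "f = (\<Sum>j<n. (-s)^(n - Suc j) * y^j) * w" by (simp add: f_def sum_distrib_right)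
    then have "lin_form * f = ((y - (-s)) * (\<Sum>j<n. (-s)^(n - Suc j) * y^j)) * w"
      by (simp add: L mult.assoc)
    also have "\<dots> = (y^n - (-s)^n) * w" by (simp only: power_diff_sumr2[symmetric])
    also have "\<dots> = (y^n + s^n) * w" using on by simp
    finally show ?thesis .
  qed
  define l34 where "l34 \<mu> = lookup \<mu> 3 + lookup \<mu> 4" for \<mu> :: "5 \<Rightarrow>\<^sub>0 nat"
  have a34: "addf l34" unfolding l34_def by (intro addf_plus addf_lk)
  have s34: "hw l34 s 0" unfolding s_def by (intro hw_add hw_var_c) (simp_all add: l34_def lookup_single dist5)
  have y34: "hw l34 y 1" unfolding y_def by (intro hw_add hw_var_c) (simp_all add: l34_def lookup_single dist5)
  have w34: "hw l34 w 0" unfolding w_def m_def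
  proof (rule hw_sum)
    fix i assume "i \<in> I3"
    then have "l34 (single i 1) = 0" by (auto simp: I3_def l34_def lookup_single dist5)
    then have "hw l34 (single 0 (c i) * var i ^ D0 :: 'k poly5) (l34 0 + D0 * 0)"
      by (intro hw_mult hw_pow a34 hw_var_c hw_single)
    then show "hw l34 (single 0 (c i) * var i ^ D0) 0" by (simp add: addf_0[OF a34])
  qed
  have e1: "lookup (s^n * w) \<beta> = c 0 * r \<beta> 0 + c 1 * r \<beta> 1 + c 2 * r \<beta> 2" for \<beta>
    by (simp only: lw sumI3 r_def)
  have cc: "c 0 = x1" "c 1 = x2" "c 2 = x3" by (simp_all add: c_def dist5 dist5[symmetric])
  have inI_Lf: "lin_form * f \<in> the_ideal d"
  proof (rule keys_in_ideal)
    fix \<mu> assume "\<mu> \<in> keys (lin_form * f)"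
    then have "\<mu> \<in> keys (y^n * w) \<or> \<mu> \<in> keys (s^n * w)" unfolding Lf distrib_right by (rule keys_addD)
    then show "inI d \<mu>"
    proof
      assume "\<mu> \<in> keys (y^n * w)"
      then obtain \<alpha> \<beta> where ab: "\<alpha> \<in> keys (y^n)" "\<mu> = \<alpha> + \<beta>" by (elim keys_multE)
      have "hw l34 (y^n) (n * 1)" by (intro hw_pow a34 y34)
      then have "lookup \<alpha> 3 + lookup \<alpha> 4 = 2*d - 1" using ab(1) by (simp add: hw_def l34_def n_def)
      then have "d \<le> lookup \<alpha> 3 \<or> d \<le> lookup \<alpha> 4" by linarith
      then have "inI d \<alpha>" unfolding inI_def by blast
      then show "inI d \<mu>" unfolding ab(2) by (rule inI_add)
    next
      assume mu: "\<mu> \<in> keys (s^n * w)"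
      have "hw (\<lambda>\<mu>. lookup \<mu> 3) s 0" unfolding s_def by (intro hw_add hw_var_c) (simp_all add: lookup_single dist5)
      then have "hw (\<lambda>\<mu>. lookup \<mu> 3) (s^n * w) (n * 0 + 0)"
        using w34 by (intro hw_mult hw_pow addf_lk) (auto simp: hw_def l34_def)
      then have m3: "lookup \<mu> 3 = 0" using mu by (simp add: hw_def)
      have "hw (\<lambda>\<mu>. lookup \<mu> 4) s 0" unfolding s_def by (intro hw_add hw_var_c) (simp_all add: lookup_single dist5)
      then have "hw (\<lambda>\<mu>. lookup \<mu> 4) (s^n * w) (n * 0 + 0)"
        using w34 by (intro hw_mult hw_pow addf_lk) (auto simp: hw_def l34_def)
      then have m4: "lookup \<mu> 4 = 0" using mu by (simp add: hw_def)
      have "hw mdeg (s^n * w) (n * 1 + D0)" by (intro hw_mult hw_pow addf_mdeg hs hw')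
      then have md: "mdeg \<mu> = (2*d-1) + D0" using mu by (simp add: hw_def n_def)
      show "inI d \<mu>"
      proof (rule ccontr)
        assume "\<not> inI d \<mu>"
        then have "\<mu> = \<beta>1 \<or> \<mu> = \<beta>2" using cls m3 m4 md by blast
        moreover have "lookup (s^n * w) \<beta>1 = 0"
          using xs(2) e1[of \<beta>1] cc by (simp add: mult.commute)
        moreover have "lookup (s^n * w) \<beta>2 = 0"
          using xs(3) e1[of \<beta>2] cc by (simp add: mult.commute)
        ultimately show False using mu by (auto simp: in_keys_iff)
      qed
    qed
  qed
  obtain i0 where i0: "i0 \<in> I3" "c i0 \<noteq> 0"
  proof -
    have "c 0 \<noteq> 0 \<or> c 1 \<noteq> 0 \<or> c 2 \<noteq> 0" using xs(1) cc by simp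
    then show ?thesis using that unfolding I3_def by blast
  qed
  have i0': "i0 \<noteq> 3" "i0 \<noteq> 4" using i0(1) unfolding I3_def by (auto simp: dist5 dist5[symmetric])
  define \<kappa> :: "5 \<Rightarrow>\<^sub>0 nat" where "\<kappa> = single 3 (d-1) + single 4 (d-1)"
  define \<mu>s where "\<mu>s = \<kappa> + single i0 D0"
  have lmu: "lookup \<mu>s j = (if j = i0 then D0 else 0) + (if j = 3 then d - 1 else 0) + (if j = 4 then d - 1 else 0)" for j
    using i0' by (auto simp: \<mu>s_def \<kappa>_def lookup_add lookup_single when_def dist5)
  have nI: "\<not> inI d \<mu>s"
  proof -
    have "lookup \<mu>s j < d" for j using lmu[of j] D0 d dist5 i0' by auto
    moreover have "lookup \<mu>s 0 < (d+1) div 2" using lmu[of 0] D0 d dist5 by auto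
    ultimately show ?thesis unfolding inI_def by (meson not_le)
  qed
  have l34mu: "l34 \<mu>s = 2*d - 2" using lmu[of 3] lmu[of 4] i0' d by (simp add: l34_def dist5)
  have "lookup f \<mu>s = (\<Sum>j<n. if j = n - 1 then lookup (y^(2*d-2) * w) \<mu>s else 0)"
    unfolding f_def lookup_sum
  proof (rule sum.cong[OF refl])
    fix j assume j: "j \<in> {..<n}"
    show "lookup ((-s)^(n - Suc j) * y^j * w) \<mu>s = (if j = n - 1 then lookup (y^(2*d-2) * w) \<mu>s else 0)"
    proof (cases "j = n - 1")
      case True
      then show ?thesis using d by (simp add: n_def numeral_2_eq_2)
    next
      case False
      have "hw l34 ((-s)^(n - Suc j) * y^j * w) ((n - Suc j) * 0 + j * 1 + 0)"
        by (intro hw_mult hw_pow hw_uminus a34 s34 y34 w34)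
      then have "\<mu>s \<notin> keys ((-s)^(n - Suc j) * y^j * w)"
        using False l34mu j d by (auto simp: hw_def n_def)
      then show ?thesis using False by (simp add: in_keys_iff)
    qed
  qed
  also have "\<dots> = lookup (y^(2*d-2) * w) \<mu>s"
  proof -
    have nn: "n - 1 \<in> {..<n}" using d by (simp add: n_def)
    then show ?thesis by (simp only: sum.delta[OF finite_lessThan] nn if_True)
  qed
  also have "\<dots> = (\<Sum>i\<in>I3. if i = i0 then c i0 * lookup (y^(2*d-2)) \<kappa> else 0)"
    unfolding lw
  proof (rule sum.cong[OF refl])
    fix i assume i: "i \<in> I3"
    show "c i * lookup (y^(2*d-2) * m i) \<mu>s = (if i = i0 then c i0 * lookup (y^(2*d-2)) \<kappa> else 0)"
    proof (cases "i = i0")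
      case True
      then show ?thesis unfolding m_def var_pow \<mu>s_def by (simp add: LM1)
    next
      case False
      have "i \<noteq> 3" "i \<noteq> 4" using i unfolding I3_def by (auto simp: dist5 dist5[symmetric])
      then have "lookup \<mu>s i = 0" using lmu[of i] False by simp
      then have "\<forall>\<gamma>. \<mu>s \<noteq> \<gamma> + single i D0"
        using D0 by (auto simp: lookup_add)
      then show ?thesis unfolding m_def var_pow using False by (simp add: LM2)
    qed
  qed
  also have "\<dots> = c i0 * of_nat ((2*d-2) choose (d-1))"
    using i0(1) lookup_y_pow[of d, where 'k='k] d by (simp add: y_def \<kappa>_def)
  finally have lf: "lookup f \<mu>s = c i0 * of_nat ((2*d-2) choose (d-1))" .
  have "(of_nat ((2*d-2) choose (d-1)) :: 'k) \<noteq> 0"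
    using d by (simp add: of_nat_eq_0_iff)
  then have "\<mu>s \<in> keys f" using lf i0(2) by (simp add: in_keys_iff)
  then have fnot: "f \<notin> the_ideal d" using nI ideal_keys by metis
  show ?thesis unfolding mult_L_injective_def using hf inI_Lf fnot by blast
qed



lemma mdeg5: "mdeg \<mu> = lookup \<mu> 0 + lookup \<mu> 1 + lookup \<mu> 2 + lookup \<mu> 3 + lookup \<mu> 4"
  by (simp add: mdeg_def sum5)

lemma mono3_eq:
  fixes \<mu> :: "5 \<Rightarrow>\<^sub>0 nat"
  assumes "lookup \<mu> 0 = a" "lookup \<mu> 1 = b" "lookup \<mu> 2 = c" "lookup \<mu> 3 = 0" "lookup \<mu> 4 = 0"
  shows "\<mu> = single 0 a + single 1 b + single 2 c"
proof (rule poly_mapping_eqI)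
  fix j :: 5
  show "lookup \<mu> j = lookup (single 0 a + single 1 b + single 2 c) j"
    using j5[of j] assms by (auto simp: lookup_add lookup_single dist5 dist5[symmetric])
qed

lemma noninj_main:
  assumes d: "5 \<le> d"
  shows "\<not> mult_L_injective (the_ideal d :: 'k::field_char_0 poly5 set) ((5 * d - 5) div 2 - 1)"
proof (cases "even d")
  case False
  then obtain e where e: "d = 2 * e + 1" by (metis oddE)
  let ?\<beta> = "single 0 e + single 1 (2*e) + single 2 (2*e) :: 5 \<Rightarrow>\<^sub>0 nat"
  have cls: "\<mu> = ?\<beta> \<or> \<mu> = ?\<beta>" if "lookup \<mu> 3 = 0" "lookup \<mu> 4 = 0" "mdeg \<mu> = (2*d-1) + (e - 1)" "\<not> inI d \<mu>" for \<mu>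
  proof -
    have lt: "lookup \<mu> j < d" for j using that(4) unfolding inI_def by (meson not_le)
    have mx: "\<not> (e + 1 \<le> lookup \<mu> 0 \<and> e \<le> lookup \<mu> 1)" using that(4) e unfolding inI_def by auto
    have s: "lookup \<mu> 0 + lookup \<mu> 1 + lookup \<mu> 2 = 5 * e" using that(1-3) e d by (simp add: mdeg5)
    have "lookup \<mu> 0 = e \<and> lookup \<mu> 1 = 2*e \<and> lookup \<mu> 2 = 2*e"
      using lt[of 0] lt[of 1] lt[of 2] mx s e by linarith
    then show ?thesis using mono3_eq that(1,2) by blast
  qed
  have D0: "1 \<le> e - 1" "e - 1 < d div 2" using e d by simp_all
  have "\<not> mult_L_injective (the_ideal d :: 'k poly5 set) ((e - 1) + 2*d - 2)"
    by (rule noninj_core[OF d D0 cls])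
  moreover have "(e - 1) + 2*d - 2 = (5 * d - 5) div 2 - 1" using e d by simp
  ultimately show ?thesis by simp
next
  case True
  then obtain e where e: "d = 2 * e" by (metis evenE)
  let ?\<beta>1 = "single 0 (e-1) + single 1 (2*e-1) + single 2 (2*e-1) :: 5 \<Rightarrow>\<^sub>0 nat"
  let ?\<beta>2 = "single 0 (2*e-1) + single 1 (e-1) + single 2 (2*e-1) :: 5 \<Rightarrow>\<^sub>0 nat"
  have cls: "\<mu> = ?\<beta>1 \<or> \<mu> = ?\<beta>2" if "lookup \<mu> 3 = 0" "lookup \<mu> 4 = 0" "mdeg \<mu> = (2*d-1) + (e - 2)" "\<not> inI d \<mu>" for \<mu>
  proof -
    have lt: "lookup \<mu> j < d" for j using that(4) unfolding inI_def by (meson not_le)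
    have mx: "\<not> (e \<le> lookup \<mu> 0 \<and> e \<le> lookup \<mu> 1)" using that(4) e unfolding inI_def by auto
    have s: "lookup \<mu> 0 + lookup \<mu> 1 + lookup \<mu> 2 = 5 * e - 3" using that(1-3) e d by (simp add: mdeg5)
    have "(lookup \<mu> 0 = e-1 \<and> lookup \<mu> 1 = 2*e-1 \<and> lookup \<mu> 2 = 2*e-1) \<or>
          (lookup \<mu> 0 = 2*e-1 \<and> lookup \<mu> 1 = e-1 \<and> lookup \<mu> 2 = 2*e-1)"
      using lt[of 0] lt[of 1] lt[of 2] mx s e d by linarith
    then show ?thesis using mono3_eq that(1,2) by blast
  qed
  have D0: "1 \<le> e - 2" "e - 2 < d div 2" using e d by simp_all
  have "\<not> mult_L_injective (the_ideal d :: 'k poly5 set) ((e - 2) + 2*d - 2)"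
    by (rule noninj_core[OF d D0 cls])
  moreover have "(e - 2) + 2*d - 2 = (5 * d - 5) div 2 - 1" using e d by simp
  ultimately show ?thesis by simp
qed

theorem lemma5p8:
  fixes d :: nat
  assumes "d \<ge> 5"
  shows "fails_WLP_in_degree (the_ideal d :: 'k::field_char_0 poly5 set) ((5 * d - 5) div 2 - 1)"
  unfolding fails_WLP_in_degree_def using noninj_main[OF assms] nonsurj_main[OF assms] by blast


end
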